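(* Let $\mathcal{F}\subseteq\mathcal{P}(\omega)$ be a free filter. Then $\mathcal{F}\times 2$ is homeomorphic to $\mathcal{F}$.
   Context: $\mathcal{P}(\omega)$ carries the Cantor set topology, obtained by identifying each subset of $\omega$ with its characteristic function in $2^\omega$; $\mathcal{F}$ has the subspace topology, and $2=\{0,1\}$ is discrete. A filter on $\omega$ is free if it contains all cofinite subsets of $\omega$ (and does not contain $\emptyset$). *)

theory Defs
  imports "HOL-Analysis.Analysis"
begin

definition two_top :: "nat topology" where
  "two_top = discrete_topology {0, 1}"

definition char_fun :: "nat set \<Rightarrow> (nat \<Rightarrow> nat)" where
  "char_fun A = (\<lambda>n. if n \<in> A then 1 else 0)"

definition cantor_powerset_top :: "nat set topology" where
  "cantor_powerset_top = pullback_topology UNIV char_fun (product_topology (\<lambda>_. two_top) UNIV)"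

definition free_filter :: "nat set set \<Rightarrow> bool" where
  "free_filter F \<longleftrightarrow>
     {} \<notin> F \<and>
     (\<forall>A B. A \<in> F \<and> B \<in> F \<longrightarrow> A \<inter> B \<in> F) \<and>
     (\<forall>A B. A \<in> F \<and> A \<subseteq> B \<longrightarrow> B \<in> F) \<and>
     (\<forall>A. finite (- A) \<longrightarrow> A \<in> F)"

end

theory Submission imports Defs "HOL-Library.Infinite_Set" begin

lemma top_C [simp]: "topspace cantor_powerset_top = UNIV"
  by (auto simp: cantor_powerset_top_def topspace_pullback_topology two_top_def char_fun_def PiE_def extensional_def)

lemma top_two [simp]: "topspace two_top = {0,1}"
  by (simp add: two_top_def)

lemma cont_into_C:
  assumes "\<And>n. continuous_map X two_top (\<lambda>x. char_fun (f x) n)"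
  shows "continuous_map X cantor_powerset_top f"
  unfolding cantor_powerset_top_def
  by (rule continuous_map_pullback') (auto simp: continuous_map_componentwise_UNIV o_def assms)

lemma coord_cont: "continuous_map cantor_powerset_top two_top (\<lambda>A. char_fun A n)"
proof -
  have "continuous_map cantor_powerset_top two_top ((\<lambda>x. x n) \<circ> char_fun)"
    unfolding cantor_powerset_top_def
    by (rule continuous_map_pullback) (rule continuous_map_product_projection, simp)
  then show ?thesis by (simp add: o_def)
qed

lemma two_cont: "continuous_map two_top two_top (h::nat\<Rightarrow>nat) \<longleftrightarrow> h \<in> {0,1} \<rightarrow> {0,1}"
  by (simp add: two_top_def)

definition G :: "(nat \<Rightarrow> nat) \<Rightarrow> nat set \<times> nat \<Rightarrow> nat set" where
  "G e p = (fst p - range e) \<union> (if snd p = 0 then {e 0} else {}) \<union> {e (Suc m) | m. e m \<in> fst p}"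

definition H :: "(nat \<Rightarrow> nat) \<Rightarrow> nat set \<Rightarrow> nat set \<times> nat" where
  "H e B = ((B - range e) \<union> {e m | m. e (Suc m) \<in> B}, if e 0 \<in> B then 0 else 1)"

lemma HG: "inj e \<Longrightarrow> i \<in> {0,1} \<Longrightarrow> H e (G e (A,i)) = (A,i)"
  unfolding H_def G_def by (auto simp: inj_eq)

lemma GH:
  assumes "inj e" shows "G e (H e B) = B"
proof -
  define A' where "A' = (B - range e) \<union> {e m | m. e (Suc m) \<in> B}"
  have h: "H e B = (A', if e 0 \<in> B then 0 else 1)" unfolding H_def A'_def by simp
  have 1: "A' - range e = B - range e" unfolding A'_def by auto
  have 2: "e m \<in> A' \<longleftrightarrow> e (Suc m) \<in> B" for m
    unfolding A'_def using assms by (auto simp: inj_eq)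
  have 3: "{e (Suc m) | m. e m \<in> A'} = {e (Suc m) | m. e (Suc m) \<in> B}" using 2 by auto
  have 4: "B \<inter> range e = (if e 0 \<in> B then {e 0} else {}) \<union> {e (Suc m) | m. e (Suc m) \<in> B}"
  proof (intro equalityI subsetI)
    fix x assume "x \<in> B \<inter> range e"
    then obtain k where k: "x = e k" "e k \<in> B" by auto
    show "x \<in> (if e 0 \<in> B then {e 0} else {}) \<union> {e (Suc m) | m. e (Suc m) \<in> B}"
    proof (cases k)
      case 0 then show ?thesis using k by simp
    next
      case (Suc m) then show ?thesis using k by blast
    qed
  qed (auto split: if_splits)
  have "G e (H e B) = (B - range e) \<union> (B \<inter> range e)"
    unfolding h G_def fst_conv snd_conv 1 3 4 by auto
  also have "\<dots> = B" by blast
  finally show ?thesis .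
qed

lemma G_cont:
  assumes "inj e" and mem: "\<And>A i. A \<in> F \<Longrightarrow> i \<in> {0,1} \<Longrightarrow> G e (A,i) \<in> F"
  shows "continuous_map (prod_topology (subtopology cantor_powerset_top F) two_top)
           (subtopology cantor_powerset_top F) (G e)"
proof (rule continuous_map_into_subtopology)
  show "G e \<in> topspace (prod_topology (subtopology cantor_powerset_top F) two_top) \<rightarrow> F"
    using mem by auto
  show "continuous_map (prod_topology (subtopology cantor_powerset_top F) two_top) cantor_powerset_top (G e)"
  proof (rule cont_into_C)
    fix n
    have c1: "continuous_map (prod_topology (subtopology cantor_powerset_top F) two_top) two_top
               (\<lambda>p. char_fun (fst p) k)" for k
      by (rule continuous_map_compose[OF continuous_map_fst, where g="\<lambda>A. char_fun A k", simplified o_def])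
         (rule continuous_map_from_subtopology[OF coord_cont])
    consider "n \<notin> range e" | "n = e 0" | m where "n = e (Suc m)"
      by (metis imageE not0_implies_Suc)
    then show "continuous_map (prod_topology (subtopology cantor_powerset_top F) two_top) two_top
               (\<lambda>x. char_fun (G e x) n)"
    proof cases
      case 1
      then have "(\<lambda>x. char_fun (G e x) n) = (\<lambda>p. char_fun (fst p) n)"
        by (auto simp: G_def char_fun_def fun_eq_iff)
      then show ?thesis using c1 by simp
    next
      case 2
      have "(\<lambda>x. char_fun (G e x) n) = (\<lambda>v. if v = 0 then 1 else 0) \<circ> snd"
        using assms(1) by (auto simp: G_def char_fun_def 2 inj_eq fun_eq_iff)
      moreover have "continuous_map (prod_topology (subtopology cantor_powerset_top F) two_top) two_top
         ((\<lambda>v. if v = 0 then 1 else 0) \<circ> snd)"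
        by (rule continuous_map_compose[OF continuous_map_snd]) (simp add: two_top_def)
      ultimately show ?thesis by simp
    next
      case 3
      then have "(\<lambda>x. char_fun (G e x) n) = (\<lambda>p. char_fun (fst p) (e m))"
        using assms(1) by (auto simp: G_def char_fun_def inj_eq fun_eq_iff)
      then show ?thesis using c1 by simp
    qed
  qed
qed

lemma H_cont:
  assumes "inj e" and mem: "\<And>B. B \<in> F \<Longrightarrow> fst (H e B) \<in> F"
  shows "continuous_map (subtopology cantor_powerset_top F)
           (prod_topology (subtopology cantor_powerset_top F) two_top) (H e)"
proof -
  have c1: "continuous_map (subtopology cantor_powerset_top F) two_top (\<lambda>B. char_fun B k)" for k
    by (rule continuous_map_from_subtopology[OF coord_cont])
  have eq: "H e = (\<lambda>B. (fst (H e B), snd (H e B)))" by simp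
  have A: "continuous_map (subtopology cantor_powerset_top F) (subtopology cantor_powerset_top F) (\<lambda>B. fst (H e B))"
  proof (rule continuous_map_into_subtopology)
    show "(\<lambda>B. fst (H e B)) \<in> topspace (subtopology cantor_powerset_top F) \<rightarrow> F"
      using mem by auto
    show "continuous_map (subtopology cantor_powerset_top F) cantor_powerset_top (\<lambda>B. fst (H e B))"
    proof (rule cont_into_C)
      fix n
      consider "n \<notin> range e" | m where "n = e m" by blast
      then show "continuous_map (subtopology cantor_powerset_top F) two_top (\<lambda>x. char_fun (fst (H e x)) n)"
      proof cases
        case 1
        then have "(\<lambda>x. char_fun (fst (H e x)) n) = (\<lambda>B. char_fun B n)"
          by (auto simp: H_def char_fun_def fun_eq_iff)
        then show ?thesis using c1 by simp
      next
        case 2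
        then have "(\<lambda>x. char_fun (fst (H e x)) n) = (\<lambda>B. char_fun B (e (Suc m)))"
          using assms(1) by (auto simp: H_def char_fun_def inj_eq fun_eq_iff)
        then show ?thesis using c1 by simp
      qed
    qed
  qed
  have "(\<lambda>B. snd (H e B)) = (\<lambda>v. if v = 1 then 0 else 1) \<circ> (\<lambda>B. char_fun B (e 0))"
    by (auto simp: H_def char_fun_def fun_eq_iff)
  moreover have "continuous_map (subtopology cantor_powerset_top F) two_top
      ((\<lambda>v. if v = 1 then 0 else 1) \<circ> (\<lambda>B. char_fun B (e 0)))"
    by (rule continuous_map_compose[OF c1]) (simp add: two_top_def)
  ultimately have B: "continuous_map (subtopology cantor_powerset_top F) two_top (\<lambda>B. snd (H e B))"
    by simp
  show ?thesis by (subst eq, rule continuous_map_pairedI[OF A B])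
qed

lemma main_aux:
  assumes "inj e" and memG: "\<And>A i. A \<in> F \<Longrightarrow> i \<in> {0,1} \<Longrightarrow> G e (A,i) \<in> F"
    and memH: "\<And>B. B \<in> F \<Longrightarrow> fst (H e B) \<in> F"
  shows "prod_topology (subtopology cantor_powerset_top F) two_top
           homeomorphic_space (subtopology cantor_powerset_top F)"
  unfolding homeomorphic_space_def homeomorphic_maps_def
proof (intro exI conjI)
  show "continuous_map (prod_topology (subtopology cantor_powerset_top F) two_top)
           (subtopology cantor_powerset_top F) (G e)" by (rule G_cont[OF assms(1,2)])
  show "continuous_map (subtopology cantor_powerset_top F)
           (prod_topology (subtopology cantor_powerset_top F) two_top) (H e)" by (rule H_cont[OF assms(1,3)])
  show "\<forall>x\<in>topspace (prod_topology (subtopology cantor_powerset_top F) two_top). H e (G e x) = x"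
    using HG[OF assms(1)] by auto
  show "\<forall>y\<in>topspace (subtopology cantor_powerset_top F). G e (H e y) = y"
    using GH[OF assms(1)] by auto
qed

theorem mainTheorem4:
  fixes F :: "nat set set"
  assumes "free_filter F"
  shows "prod_topology (subtopology cantor_powerset_top F) two_top
           homeomorphic_space (subtopology cantor_powerset_top F)"
proof -
  have inter: "\<And>A B. A \<in> F \<Longrightarrow> B \<in> F \<Longrightarrow> A \<inter> B \<in> F"
    and up: "\<And>A B. A \<in> F \<Longrightarrow> A \<subseteq> B \<Longrightarrow> B \<in> F"
    and cof: "\<And>A. finite (- A) \<Longrightarrow> A \<in> F"
    using assms unfolding free_filter_def by blast+
  show ?thesis
  proof (cases "\<exists>X\<in>F. infinite (- X)")
    case True
    then obtain X where X: "X \<in> F" "infinite (- X)" by blast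
    define e where "e = enumerate (- X)"
    have inj: "inj e" unfolding e_def using strict_mono_enumerate[OF X(2)] strict_mono_imp_inj_on by blast
    have rng: "range e = - X" unfolding e_def using range_enumerate[OF X(2)] .
    show ?thesis
    proof (rule main_aux[OF inj])
      fix A i assume "A \<in> F" "i \<in> {0::nat,1}"
      have "A \<inter> X \<subseteq> G e (A,i)" unfolding G_def using rng by auto
      then show "G e (A,i) \<in> F" using inter[OF \<open>A \<in> F\<close> X(1)] up by blast
    next
      fix B assume "B \<in> F"
      have "B \<inter> X \<subseteq> fst (H e B)" unfolding H_def using rng by auto
      then show "fst (H e B) \<in> F" using inter[OF \<open>B \<in> F\<close> X(1)] up by blast
    qed
  next
    case False
    then have fin: "\<And>X. X \<in> F \<Longrightarrow> finite (- X)" by blast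
    show ?thesis
    proof (rule main_aux[of id])
      show "inj (id::nat\<Rightarrow>nat)" by simp
      fix A i assume "A \<in> F" "i \<in> {0::nat,1}"
      have "- G id (A,i) \<subseteq> insert 0 (Suc ` (- A))"
      proof
        fix x assume x: "x \<in> - G id (A,i)"
        show "x \<in> insert 0 (Suc ` (- A))"
        proof (cases x)
          case (Suc m)
          have "m \<notin> A"
          proof
            assume "m \<in> A"
            then have "x \<in> G id (A,i)" unfolding G_def Suc by auto
            then show False using x by simp
          qed
          then show ?thesis using Suc by simp
        qed simp
      qed
      then have "finite (- G id (A,i))"
        using fin[OF \<open>A \<in> F\<close>] by (meson finite_imageI finite_insert finite_subset)
      then show "G id (A,i) \<in> F" by (rule cof)
    next
      fix B assume "B \<in> F"
      have "- fst (H id B) = Suc -` (- B)" unfolding H_def by auto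
      moreover have "finite (Suc -` (- B))"
        using fin[OF \<open>B \<in> F\<close>] by (rule finite_vimageI) simp
      ultimately show "fst (H id B) \<in> F" using cof by simp
    qed
  qed
qed

end
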